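(* Let $q$ be a prime power and $t\ge 1$ an integer. In a projective space over $\mathbb{F}_q$, let $\Omega$ be a $(t-2)$-dimensional subspace, $\Gamma$ a plane skew from $\Omega$, $\Pi=\langle\Omega,\Gamma\rangle$, $\bar{B}$ a small minimal blocking set of $\Gamma$, and $K$ the cone with vertex $\Omega$ and base $\bar{B}$. Then every plane $\pi$ of $\Pi$ meets $K$ either in the whole plane $\pi$, or in a union of lines through a fixed point, or in a minimal blocking set of $\pi$ that is projectively equivalent to $\bar{B}$.
   Context: The cone with vertex $\Omega$ and base $\bar{B}$ is $\bigcup_{P\in\bar B}\langle P,\Omega\rangle$. A blocking set of a plane over $\mathbb{F}_q$ is a point set meeting every line; minimal means no proper subset does; small means fewer than $3(q+1)/2$ points. *)

theory Defs
  imports "HOL-Analysis.Analysis"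
begin

text \<open>A projective subspace of projective dimension d is a linear subspace of V
  of (vector) dimension d+1; points are 1-dimensional subspaces.
  q = CARD('a).\<close>

type_synonym ('a,'n) psub = "('a^'n) set"

definition psubspace :: "('a::field,'n::finite) psub \<Rightarrow> bool" where
  "psubspace U \<longleftrightarrow> vec.subspace U"

definition ppoint :: "('a::field,'n::finite) psub \<Rightarrow> bool" where
  "ppoint P \<longleftrightarrow> vec.subspace P \<and> vec.dim P = 1"

definition pline :: "('a::field,'n::finite) psub \<Rightarrow> bool" where
  "pline L \<longleftrightarrow> vec.subspace L \<and> vec.dim L = 2"

definition pplane :: "('a::field,'n::finite) psub \<Rightarrow> bool" where
  "pplane L \<longleftrightarrow> vec.subspace L \<and> vec.dim L = 3"

definition pjoin :: "('a::field,'n::finite) psub \<Rightarrow> ('a,'n) psub \<Rightarrow> ('a,'n) psub" where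
  "pjoin U W = vec.span (U \<union> W)"

definition skew :: "('a::field,'n::finite) psub \<Rightarrow> ('a,'n) psub \<Rightarrow> bool" where
  "skew U W \<longleftrightarrow> U \<inter> W = {0}"

definition points_of :: "('a::field,'n::finite) psub \<Rightarrow> ('a,'n) psub set" where
  "points_of U = {P. ppoint P \<and> P \<subseteq> U}"

definition blocking_set :: "('a::field,'n::finite) psub \<Rightarrow> ('a,'n) psub set \<Rightarrow> bool" where
  "blocking_set G B \<longleftrightarrow> B \<subseteq> points_of G \<and>
     (\<forall>L. pline L \<and> L \<subseteq> G \<longrightarrow> (\<exists>P\<in>B. P \<subseteq> L))"

definition minimal_blocking_set :: "('a::field,'n::finite) psub \<Rightarrow> ('a,'n) psub set \<Rightarrow> bool" where
  "minimal_blocking_set G B \<longleftrightarrow> blocking_set G B \<and> (\<forall>B'. B' \<subset> B \<longrightarrow> \<not> blocking_set G B')"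

definition small_set :: "('a::{field,finite},'n::finite) psub set \<Rightarrow> bool" where
  "small_set B \<longleftrightarrow> 2 * card B < 3 * (CARD('a) + 1)"

definition cone :: "('a::field,'n::finite) psub \<Rightarrow> ('a,'n) psub set \<Rightarrow> ('a,'n) psub set" where
  "cone Om B = (\<Union>P\<in>B. points_of (pjoin P Om))"

definition proj_equiv :: "('a::field,'n::finite) psub set \<Rightarrow> ('a,'n) psub set \<Rightarrow> bool" where
  "proj_equiv S T \<longleftrightarrow> (\<exists>f. Vector_Spaces.linear (*s) (*s) f \<and> bij f \<and> (\<lambda>P. f ` P) ` S = T)"

end

theory Submission
  imports Defs
begin


lemma ppoint_span: "(x::'a::field^'n) \<noteq> 0 \<Longrightarrow> ppoint (vec.span {x})"
  unfolding ppoint_def by (simp add: vec.dim_span)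

lemma ppoint_elem: assumes "ppoint P" "v \<in> P" "v \<noteq> 0" shows "P = vec.span {v}"
proof -
  have sub: "vec.subspace P" "vec.dim P = 1" using assms unfolding ppoint_def by auto
  have "vec.span {v} \<subseteq> P" using sub assms by (simp add: vec.span_minimal)
  moreover have "vec.dim P \<le> vec.dim (vec.span {v})" using sub assms by (simp add: vec.dim_span)
  ultimately show ?thesis using vec.subspace_dim_equal[of "vec.span {v}" P] sub by auto
qed

lemma ppoint_ex: assumes "ppoint P" shows "\<exists>v. v \<noteq> 0 \<and> P = vec.span {v}"
proof -
  have sub: "vec.subspace P" "vec.dim P = 1" using assms unfolding ppoint_def by auto
  have "P \<noteq> {0}" using sub by (metis vec.dim_span vec.dim_singleton vec.span_eq_iff zero_neq_one)
  then obtain v where "v \<in> P" "v \<noteq> 0" using sub vec.subspace_0 by blast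
  then show ?thesis using ppoint_elem assms by blast
qed

lemma span_scale: "(c::'a::field) \<noteq> 0 \<Longrightarrow> vec.span {c *s (x::'a^'n)} = vec.span {x}"
  using vec.span_image_scale[of "{x}" "\<lambda>_. c"] by simp



lemma pline_two: assumes "(x::'a::field^'n) \<notin> vec.span {r}" "r \<noteq> 0"
  shows "pline (vec.span {x, r})"
proof -
  have ind: "vec.independent {x, r}"
    using assms by (simp add: vec.independent_insert)
  have "x \<noteq> r" using assms vec.span_base by blast
  then have "card {x, r} = 2" by simp
  then show ?thesis unfolding pline_def using vec.dim_span_eq_card_independent[OF ind] by simp
qed

lemma contains_line: assumes "vec.subspace (W::('a::field^'n) set)" "vec.dim W \<ge> 2"
  shows "\<exists>L. pline L \<and> L \<subseteq> W"
proof -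
  obtain C where C: "C \<subseteq> W" "vec.independent C" "W \<subseteq> vec.span C" "card C = vec.dim W"
    using vec.basis_exists by blast
  have fin: "finite C" using C(2) vec.finiteI_independent by blast
  have "\<not> card C \<le> Suc 0" using assms C by simp
  then obtain a b where ab: "a \<in> C" "b \<in> C" "a \<noteq> b"
    using fin card_le_Suc0_iff_eq[of C] by auto
  have ind: "vec.independent {a, b}" using vec.independent_mono[OF C(2), of "{a,b}"] ab by auto
  have "vec.span {a, b} \<subseteq> W" using C ab assms(1) by (intro vec.span_minimal) auto
  moreover have "pline (vec.span {a,b})" unfolding pline_def
    using vec.dim_span_eq_card_independent[OF ind] ab by simp
  ultimately show ?thesis by blast
qed

lemma lin_img_sub: assumes "Vector_Spaces.linear (*s) (*s) (F::'a::field^'n \<Rightarrow> 'a^'n)" "inj F"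
  "vec.subspace S" shows "vec.subspace (F ` S) \<and> vec.dim (F ` S) = vec.dim S"
  using assms vec.linear_subspace_image vec.dim_image_eq[of F S]
  by (metis inj_on_subset subset_UNIV)

lemma transport_block:
  assumes lin: "Vector_Spaces.linear (*s) (*s) (F::'a::field^'n \<Rightarrow> 'a^'n)" and bj: "bij F"
    and bl: "blocking_set G B"
  shows "blocking_set (F ` G) ((\<lambda>P. F ` P) ` B)"
proof -
  have inj: "inj F" using bj bij_is_inj by auto
  have ilin: "Vector_Spaces.linear (*s) (*s) (inv F)" using vec.inj_linear_imp_inv_linear lin inj by blast
  have iinj: "inj (inv F)" using bj by (simp add: bij_imp_bij_inv bij_is_inj)
  have pt: "ppoint (F ` P)" if "ppoint P" for P using that lin_img_sub[OF lin inj] unfolding ppoint_def by auto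
  show ?thesis unfolding blocking_set_def
  proof safe
    fix P assume "P \<in> B"
    then have "ppoint P" "P \<subseteq> G" using bl unfolding blocking_set_def points_of_def by auto
    then show "F ` P \<in> points_of (F ` G)" using pt unfolding points_of_def by auto
  next
    fix L assume L: "pline L" "L \<subseteq> F ` G"
    have "pline (inv F ` L)" using L lin_img_sub[OF ilin iinj] unfolding pline_def by auto
    moreover have "inv F ` L \<subseteq> G" using L inj by auto
    ultimately obtain P where "P \<in> B" "P \<subseteq> inv F ` L" using bl unfolding blocking_set_def by blast
    moreover have "F ` inv F ` L = L" using bj by (simp add: bij_is_surj image_f_inv_f)
    ultimately have "F ` P \<subseteq> L" by (metis image_mono)
    with \<open>P \<in> B\<close> show "\<exists>Q\<in>(\<lambda>P. F ` P) ` B. Q \<subseteq> L" by blast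
  qed
qed

lemma transport_min:
  assumes lin: "Vector_Spaces.linear (*s) (*s) (F::'a::field^'n \<Rightarrow> 'a^'n)" and bj: "bij F"
    and bl: "minimal_blocking_set G B"
  shows "minimal_blocking_set (F ` G) ((\<lambda>P. F ` P) ` B)"
proof -
  have inj: "inj F" using bj bij_is_inj by auto
  have ilin: "Vector_Spaces.linear (*s) (*s) (inv F)" using vec.inj_linear_imp_inv_linear lin inj by blast
  have ibj: "bij (inv F)" using bj by (simp add: bij_imp_bij_inv)
  have ii: "inv F ` F ` X = X" for X using inj by (simp add: image_comp)
  show ?thesis unfolding minimal_blocking_set_def
  proof (intro conjI allI impI notI)
    show "blocking_set (F ` G) ((`) F ` B)" using transport_block[OF lin bj] bl
      unfolding minimal_blocking_set_def by auto
  next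
    fix B' assume B': "B' \<subset> (`) F ` B" "blocking_set (F ` G) B'"
    have "blocking_set G ((`) (inv F) ` B')" using transport_block[OF ilin ibj B'(2)] ii by simp
    moreover have "(`) (inv F) ` B' \<subset> B"
    proof -
      have ff: "F ` inv F ` X = X" for X using bj by (simp add: bij_is_surj image_f_inv_f)
      have "(`) (inv F) ` B' \<subseteq> (`) (inv F) ` (`) F ` B" using B'(1) by blast
      also have "\<dots> = B" by (simp add: image_image inv_f_f[OF inj])
      finally have sub: "(`) (inv F) ` B' \<subseteq> B" .
      have "(`) F ` (`) (inv F) ` B' = B'" by (simp add: image_image surj_f_inv_f[OF bij_is_surj[OF bj]])
      then show ?thesis using sub B'(1) by auto
    qed
    ultimately show False using bl unfolding minimal_blocking_set_def by blast
  qed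
qed



lemma span_sub: "vec.subspace S \<Longrightarrow> vec.span S = S" by (simp add: vec.span_eq_iff)

lemma proj_exists:
  fixes Om Gam :: "('a::field^'n) set"
  assumes so: "vec.subspace Om" and sg: "vec.subspace Gam" and sk: "Om \<inter> Gam = {0}"
  shows "\<exists>p. Vector_Spaces.linear (*s) (*s) p \<and> (\<forall>x\<in>Om. p x = 0) \<and> (\<forall>x\<in>Gam. p x = x)"
proof -
  obtain BO where BO: "BO \<subseteq> Om" "vec.independent BO" "Om \<subseteq> vec.span BO" "card BO = vec.dim Om"
    using vec.basis_exists by blast
  obtain BG where BG: "BG \<subseteq> Gam" "vec.independent BG" "Gam \<subseteq> vec.span BG" "card BG = vec.dim Gam"
    using vec.basis_exists by blast
  have spO: "vec.span BO = Om" using BO so by (meson antisym vec.span_minimal)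
  have spG: "vec.span BG = Gam" using BG sg by (meson antisym vec.span_minimal)
  have fO: "finite BO" using BO(2) vec.finiteI_independent by blast
  have fG: "finite BG" using BG(2) vec.finiteI_independent by blast
  have dsum: "vec.dim {x + y |x y. x \<in> Om \<and> y \<in> Gam} = vec.dim Om + vec.dim Gam"
    using vec.dim_sums_Int[OF so sg] sk by simp
  have spU: "vec.span (BO \<union> BG) = {x + y |x y. x \<in> Om \<and> y \<in> Gam}"
    using vec.span_Un[of BO BG] spO spG by simp
  have "card (BO \<union> BG) \<le> card BO + card BG" by (rule card_Un_le)
  also have "\<dots> = vec.dim (BO \<union> BG)" using BO(4) BG(4) dsum spU
    by (metis vec.dim_span)
  finally have cd: "card (BO \<union> BG) \<le> vec.dim (BO \<union> BG)" .
  have "vec.independent (BO \<union> BG)"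
    by (rule vec.card_le_dim_spanning[of "BO \<union> BG" "BO \<union> BG"]) (auto simp: fO fG vec.span_superset cd)
  then obtain p where p: "Vector_Spaces.linear (*s) (*s) p" "\<forall>b\<in>BO \<union> BG. p b = (if b \<in> BO then 0 else b)"
    using vec.linear_independent_extend[of "BO \<union> BG" "\<lambda>b. if b \<in> BO then 0 else b"] by blast
  have disj: "BO \<inter> BG = {}"
  proof -
    have "0 \<notin> BO" using BO(2) vec.dependent_zero by blast
    moreover have "b = 0" if "b \<in> BO" "b \<in> BG" for b
    proof -
      have "b \<in> Om \<inter> Gam" using that BO(1) BG(1) by auto
      then show ?thesis using sk by simp
    qed
    ultimately show ?thesis by auto
  qed
  have "p x = 0" if "x \<in> Om" for x
    using vec.linear_eq_0_on_span[OF p(1), of BO x] p(2) that spO by auto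
  moreover have "p x = x" if "x \<in> Gam" for x
  proof -
    have e: "p b = id b" if "b \<in> BG" for b using that p(2) disj by auto
    show ?thesis using vec.linear_eq_on[OF p(1) vec.linear_id, of x BG, OF _ e] that spG by simp
  qed
  ultimately show ?thesis using p(1) by blast
qed

lemma proj_decomp:
  fixes Om Gam :: "('a::field^'n) set"
  assumes so: "vec.subspace Om" and sg: "vec.subspace Gam"
    and p: "Vector_Spaces.linear (*s) (*s) p" "\<forall>x\<in>Om. p x = 0" "\<forall>x\<in>Gam. p x = x"
    and x: "x \<in> pjoin Om Gam"
  shows "x - p x \<in> Om \<and> p x \<in> Gam"
proof -
  obtain a b where ab: "x = a + b" "a \<in> Om" "b \<in> Gam"
    using x vec.span_Un[of Om Gam] span_sub[OF so] span_sub[OF sg] unfolding pjoin_def by auto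
  have "p x = p a + p b" using ab vec.linear_add[OF p(1)] by simp
  also have "\<dots> = b" using ab p(2,3) by simp
  finally show ?thesis using ab by simp
qed

lemma cone_crit:
  fixes Om Gam :: "('a::field^'n) set"
  assumes so: "vec.subspace Om" and sg: "vec.subspace Gam"
    and p: "Vector_Spaces.linear (*s) (*s) p" "\<forall>x\<in>Om. p x = 0" "\<forall>x\<in>Gam. p x = x"
    and B: "B \<subseteq> points_of Gam" "B \<noteq> {}"
    and x: "x \<in> pjoin Om Gam" "x \<noteq> 0"
  shows "vec.span {x} \<in> cone Om B \<longleftrightarrow> (p x = 0 \<or> vec.span {p x} \<in> B)"
proof -
  have dec: "x - p x \<in> Om" "p x \<in> Gam" using proj_decomp[OF so sg p x(1)] by auto
  have mem: "vec.span {x} \<in> points_of (pjoin P Om) \<longleftrightarrow> x \<in> vec.span (P \<union> Om)" for P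
  proof -
    have "vec.span {x} \<subseteq> vec.span (P \<union> Om) \<longleftrightarrow> x \<in> vec.span (P \<union> Om)"
    proof
      assume "vec.span {x} \<subseteq> vec.span (P \<union> Om)"
      then show "x \<in> vec.span (P \<union> Om)" using vec.span_base[of x "{x}"] by blast
    next
      assume "x \<in> vec.span (P \<union> Om)"
      then show "vec.span {x} \<subseteq> vec.span (P \<union> Om)"
        by (intro vec.span_minimal) (auto simp: vec.subspace_span)
    qed
    then show ?thesis unfolding points_of_def pjoin_def using ppoint_span[OF x(2)] by simp
  qed
  have "vec.span {x} \<in> cone Om B \<longleftrightarrow> (\<exists>P\<in>B. x \<in> vec.span (P \<union> Om))"
    unfolding cone_def using mem by blast
  also have "\<dots> \<longleftrightarrow> (p x = 0 \<or> vec.span {p x} \<in> B)"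
  proof
    assume "\<exists>P\<in>B. x \<in> vec.span (P \<union> Om)"
    then obtain P where P: "P \<in> B" "x \<in> vec.span (P \<union> Om)" by blast
    have pP: "ppoint P" "P \<subseteq> Gam" using P(1) B(1) unfolding points_of_def by auto
    then have spP: "vec.span P = P" using span_sub unfolding ppoint_def by auto
    have "x \<in> {a + c | a c. a \<in> vec.span P \<and> c \<in> vec.span Om}" using P(2) unfolding vec.span_Un .
    then obtain a c where ac0: "x = a + c" "a \<in> vec.span P" "c \<in> vec.span Om" by blast
    have ac: "x = a + c" "a \<in> P" "c \<in> Om" using ac0 spP span_sub[OF so] by (metis, metis, metis)
    have "p x = p a + p c" using ac vec.linear_add[OF p(1)] by simp
    also have "\<dots> = a" using ac p(2,3) pP by auto
    finally have "p x = a" .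
    then show "p x = 0 \<or> vec.span {p x} \<in> B" using ppoint_elem[OF pP(1)] ac P(1) by auto
  next
    assume h: "p x = 0 \<or> vec.span {p x} \<in> B"
    show "\<exists>P\<in>B. x \<in> vec.span (P \<union> Om)"
    proof (cases "p x = 0")
      case True
      then have "x \<in> Om" using dec by simp
      then show ?thesis using B(2) vec.span_base by blast
    next
      case False
      then have "vec.span {p x} \<in> B" using h by simp
      moreover have "x \<in> vec.span (vec.span {p x} \<union> Om)"
      proof -
        have "x = (x - p x) + p x" by simp
        moreover have "x - p x \<in> vec.span (vec.span {p x} \<union> Om)" using dec vec.span_base by blast
        moreover have "p x \<in> vec.span (vec.span {p x} \<union> Om)"
          by (meson UnI1 vec.span_base vec.span_superset singletonI)
        ultimately show ?thesis by (metis vec.span_add)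
      qed
      ultimately show ?thesis by blast
    qed
  qed
  finally show ?thesis .
qed



theorem lemma5p8:
  fixes Om Gam pi :: "('a::{field,finite} ^ 'n::finite) set"
    and B :: "('a ^ 'n) set set"
    and t :: nat
  assumes "t \<ge> 1"
    and "vec.subspace Om" and "vec.dim Om = t - 1"
    and "pplane Gam" and "skew Om Gam"
    and "minimal_blocking_set Gam B" and "small_set B"
    and "pplane pi" and "pi \<subseteq> pjoin Om Gam"
  shows "cone Om B \<inter> points_of pi = points_of pi
      \<or> (\<exists>R \<LL>. ppoint R \<and> R \<subseteq> pi \<and> \<LL> \<noteq> {} \<and>
             (\<forall>L\<in>\<LL>. pline L \<and> R \<subseteq> L \<and> L \<subseteq> pi) \<and>
             cone Om B \<inter> points_of pi = (\<Union>L\<in>\<LL>. points_of L))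
      \<or> (minimal_blocking_set pi (cone Om B \<inter> points_of pi)
         \<and> proj_equiv B (cone Om B \<inter> points_of pi))"
proof -
  note so = assms(2)
  have sg: "vec.subspace Gam" "vec.dim Gam = 3" using assms(4) unfolding pplane_def by auto
  have spi: "vec.subspace pi" "vec.dim pi = 3" using assms(8) unfolding pplane_def by auto
  have sk: "Om \<inter> Gam = {0}" using assms(5) unfolding skew_def .
  obtain p where p: "Vector_Spaces.linear (*s) (*s) p" "\<forall>x\<in>Om. p x = 0" "\<forall>x\<in>Gam. p x = x"
    using proj_exists[OF so sg(1) sk] by blast
  have bl: "blocking_set Gam B" using assms(6) unfolding minimal_blocking_set_def by auto
  have Bsub: "B \<subseteq> points_of Gam" using bl unfolding blocking_set_def by auto
  have Bne: "B \<noteq> {}"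
  proof -
    obtain L where "pline L" "L \<subseteq> Gam" using contains_line[OF sg(1)] sg(2) by auto
    then show ?thesis using bl unfolding blocking_set_def by blast
  qed
  define K where "K = cone Om B"
  have crit: "vec.span {x} \<in> K \<longleftrightarrow> (p x = 0 \<or> vec.span {p x} \<in> B)" if "x \<in> pi" "x \<noteq> 0" for x
    unfolding K_def using cone_crit[OF so sg(1) p Bsub Bne, of x] that assms(9) by blast
  have pGam: "p x \<in> Gam" if "x \<in> pi" for x using proj_decomp[OF so sg(1) p, of x] that assms(9) by blast
  have ptpi: "vec.span {x} \<in> points_of pi" if "x \<in> pi" "x \<noteq> 0" for x
    unfolding points_of_def using ppoint_span[OF that(2)] that(1) spi(1)
    by (simp add: vec.span_minimal)
  have ptex: "\<exists>x. x \<in> pi \<and> x \<noteq> 0 \<and> X = vec.span {x}" if "X \<in> points_of pi" for X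
  proof -
    have "ppoint X" "X \<subseteq> pi" using that unfolding points_of_def by auto
    then obtain x where "x \<noteq> 0" "X = vec.span {x}" using ppoint_ex by blast
    moreover have "x \<in> X" using \<open>X = vec.span {x}\<close> vec.span_base by blast
    ultimately show ?thesis using \<open>X \<subseteq> pi\<close> by blast
  qed
  have plin: "p (a + b) = p a + p b" "p (a - b) = p a - p b" "p (c *s a) = c *s p a" for a b c
    using vec.linear_add[OF p(1)] vec.linear_diff[OF p(1)] vec.linear_scale[OF p(1)] by auto
  have p0: "p 0 = 0" using vec.linear_0[OF p(1)] .
  show ?thesis
  proof (cases "inj_on p pi")
    case True
    define W where "W = p ` pi"
    have sW: "vec.subspace W" unfolding W_def using vec.linear_subspace_image[OF p(1) spi(1)] .
    have dW: "vec.dim W = 3" unfolding W_def using vec.dim_image_eq[OF p(1), of pi] True spi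
      by (simp add: span_sub)
    have WG: "W = Gam" using vec.subspace_dim_equal[OF sW sg(1)] pGam dW sg(2) unfolding W_def by auto
    obtain g where g: "g ` UNIV \<subseteq> pi" "Vector_Spaces.linear (*s) (*s) g" "\<forall>v\<in>pi. g (p v) = v"
      using vec.linear_exists_left_inverse_on[OF p(1) spi(1) True] by blast
    have gG: "g b \<in> pi \<and> p (g b) = b" if bG0: "b \<in> Gam" for b
    proof -
      obtain v where "v \<in> pi" "b = p v" using bG0 WG unfolding W_def by blast
      then show ?thesis using g(3) by auto
    qed
    have ginj: "inj_on g Gam" by (rule inj_onI) (metis gG)
    obtain BG where BG: "BG \<subseteq> Gam" "vec.independent BG" "Gam \<subseteq> vec.span BG" "card BG = vec.dim Gam"
      using vec.basis_exists by blast
    have spG: "vec.span BG = Gam" using BG sg(1) by (meson antisym vec.span_minimal)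
    have indg: "vec.independent (g ` BG)"
      using vec.linear_independent_injective_image[OF g(2) BG(2)] ginj spG by simp
    obtain F where F: "Vector_Spaces.linear (*s) (*s) F" "inj F" "\<forall>x\<in>BG. F x = g x"
      using vec.linear_independent_extend_inj[OF BG(2) indg inj_on_subset[OF ginj BG(1)]] by blast
    have Fg: "F x = g x" if "x \<in> Gam" for x
      using vec.linear_eq_on[OF F(1) g(2), of x BG] F(3) that spG by auto
    have Fbij: "bij F" using F(2) vec.linear_inj_imp_surj[OF F(1) F(2)] by (simp add: bij_def)
    have FG: "F ` Gam = pi"
    proof
      show "F ` Gam \<subseteq> pi" using Fg gG by auto
      show "pi \<subseteq> F ` Gam"
      proof
        fix v assume "v \<in> pi"
        then have "v = F (p v)" "p v \<in> Gam" using g(3) Fg pGam by auto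
        then show "v \<in> F ` Gam" by blast
      qed
    qed
    have Fspan: "F ` vec.span {b} = vec.span {F b}" for b
      using vec.linear_span_image[OF F(1), of "{b}"] by simp
    have img: "(\<lambda>P. F ` P) ` B = K \<inter> points_of pi"
    proof
      show "(\<lambda>P. F ` P) ` B \<subseteq> K \<inter> points_of pi"
      proof
        fix X assume "X \<in> (\<lambda>P. F ` P) ` B"
        then obtain P where P: "P \<in> B" "X = F ` P" by blast
        then have Pp: "ppoint P" "P \<subseteq> Gam" using Bsub unfolding points_of_def by auto
        then obtain b where b: "b \<noteq> 0" "P = vec.span {b}" using ppoint_ex by blast
        have bG: "b \<in> Gam" using b Pp vec.span_base by blast
        define c where "c = g b"
        have c: "c \<in> pi" "p c = b" using gG[OF bG] unfolding c_def by auto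
        have c0: "c \<noteq> 0" using c b p0 by auto
        have X: "X = vec.span {c}" using P(2) b(2) Fspan Fg[OF bG] unfolding c_def by simp
        show "X \<in> K \<inter> points_of pi" using crit[OF c(1) c0] c P b X ptpi[OF c(1) c0] by auto
      qed
    next
      show "K \<inter> points_of pi \<subseteq> (\<lambda>P. F ` P) ` B"
      proof
        fix X assume X: "X \<in> K \<inter> points_of pi"
        then obtain x where x: "x \<in> pi" "x \<noteq> 0" "X = vec.span {x}" using ptex by blast
        have px: "p x \<noteq> 0" using True vec.linear_inj_on_iff_eq_0[OF p(1) spi(1)] x by blast
        then have inB: "vec.span {p x} \<in> B" using crit[OF x(1) x(2)] X x by auto
        have "F ` vec.span {p x} = vec.span {x}" using Fspan Fg[OF pGam[OF x(1)]] g(3) x(1) by simp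
        then show "X \<in> (\<lambda>P. F ` P) ` B" using inB x(3) by (metis image_eqI)
      qed
    qed
    have "minimal_blocking_set pi (K \<inter> points_of pi)"
      using transport_min[OF F(1) Fbij assms(6)] FG img by simp
    moreover have "proj_equiv B (K \<inter> points_of pi)"
      unfolding proj_equiv_def using F(1) Fbij img by blast
    ultimately show ?thesis unfolding K_def by blast
  next
    case False
    then obtain r where r: "r \<in> pi" "r \<noteq> 0" "p r = 0"
      using vec.linear_inj_on_iff_eq_0[OF p(1) spi(1)] by blast
    define R where "R = vec.span {r}"
    have Rp: "ppoint R" "R \<subseteq> pi" unfolding R_def using ppoint_span[OF r(2)] r(1) spi(1)
      by (auto simp: vec.span_minimal)
    show ?thesis
    proof (cases "\<exists>y\<in>pi. p y \<noteq> 0 \<and> vec.span {p y} \<in> B")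
      case True
      then obtain y where y: "y \<in> pi" "p y \<noteq> 0" "vec.span {p y} \<in> B" by blast
      define LL where "LL = {L. pline L \<and> R \<subseteq> L \<and> L \<subseteq> pi \<and> points_of L \<subseteq> K}"
      have notr: "x \<notin> vec.span {r}" if "p x \<noteq> 0" for x
      proof
        assume "x \<in> vec.span {r}"
        then obtain c where "x = c *s r" using vec.span_singleton by blast
        then show False using that plin r by simp
      qed
      have mk: "vec.span {x, r} \<in> LL"
        if x: "x \<in> pi" "x \<noteq> 0" "vec.span {x} \<in> K" "x \<notin> vec.span {r}" for x
      proof -
        have "pline (vec.span {x, r})" using pline_two[OF x(4) r(2)] .
        moreover have "R \<subseteq> vec.span {x, r}" unfolding R_def by (rule vec.span_mono) auto
        moreover have "vec.span {x, r} \<subseteq> pi" using x r spi(1) by (intro vec.span_minimal) auto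
        moreover have "points_of (vec.span {x, r}) \<subseteq> K"
        proof
          fix Z assume Z: "Z \<in> points_of (vec.span {x, r})"
          then have "ppoint Z" "Z \<subseteq> vec.span {x, r}" unfolding points_of_def by auto
          then obtain z where z: "z \<noteq> 0" "Z = vec.span {z}" using ppoint_ex by blast
          have zin: "z \<in> vec.span {x, r}" using z \<open>Z \<subseteq> vec.span {x, r}\<close> vec.span_base by blast
          have zpi: "z \<in> pi" using zin \<open>vec.span {x, r} \<subseteq> pi\<close> by blast
          obtain k where "z - k *s x \<in> vec.span {r}" using zin vec.span_breakdown_eq by blast
          then obtain c where "z - k *s x = c *s r" using vec.span_singleton by blast
          then have "z = c *s r + k *s x" by (simp add: algebra_simps)
          then have pz: "p z = k *s p x" using plin r by simp
          have hx: "p x = 0 \<or> vec.span {p x} \<in> B" using crit[OF x(1) x(2)] x(3) by blast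
          have "p z = 0 \<or> vec.span {p z} \<in> B"
          proof (cases "k = 0 \<or> p x = 0")
            case True then show ?thesis using pz by auto
          next
            case False then show ?thesis using pz hx span_scale[of k "p x"] by auto
          qed
          then show "Z \<in> K" using crit[OF zpi z(1)] z(2) by blast
        qed
        ultimately show ?thesis unfolding LL_def by blast
      qed
      have y0: "y \<noteq> 0" using y(2) p0 by auto
      have yK: "vec.span {y} \<in> K" using crit[OF y(1) y0] y by blast
      have yL: "vec.span {y, r} \<in> LL" using mk[OF y(1) y0 yK notr[OF y(2)]] .
      have "K \<inter> points_of pi = (\<Union>L\<in>LL. points_of L)"
      proof
        show "K \<inter> points_of pi \<subseteq> (\<Union>L\<in>LL. points_of L)"
        proof
          fix X assume X: "X \<in> K \<inter> points_of pi"
          then obtain x where x: "x \<in> pi" "x \<noteq> 0" "X = vec.span {x}" using ptex by blast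
          have pX: "ppoint X" using X unfolding points_of_def by auto
          show "X \<in> (\<Union>L\<in>LL. points_of L)"
          proof (cases "x \<in> vec.span {r}")
            case True
            then have "X \<subseteq> vec.span {r}" using x(3) by (simp add: vec.span_minimal)
            also have "\<dots> \<subseteq> vec.span {y, r}" by (rule vec.span_mono) auto
            finally show ?thesis using yL pX unfolding points_of_def by blast
          next
            case False
            have "X \<subseteq> vec.span {x, r}" unfolding x(3) by (rule vec.span_mono) auto
            then show ?thesis using mk[OF x(1) x(2) _ False] X x(3) pX unfolding points_of_def by blast
          qed
        qed
      next
        show "(\<Union>L\<in>LL. points_of L) \<subseteq> K \<inter> points_of pi"
          unfolding LL_def points_of_def by blast
      qed
      moreover have "\<forall>L\<in>LL. pline L \<and> R \<subseteq> L \<and> L \<subseteq> pi" unfolding LL_def by blast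
      moreover have "LL \<noteq> {}" using yL by blast
      ultimately show ?thesis using Rp unfolding K_def by blast
    next
      case False
      note B2 = False
      show ?thesis
      proof (cases "\<forall>x\<in>pi. p x = 0")
        case True
        have "K \<inter> points_of pi = points_of pi"
        proof
          show "points_of pi \<subseteq> K \<inter> points_of pi"
          proof
            fix X assume X: "X \<in> points_of pi"
            then obtain x where x: "x \<in> pi" "x \<noteq> 0" "X = vec.span {x}" using ptex by blast
            then show "X \<in> K \<inter> points_of pi" using crit[OF x(1) x(2)] True X by auto
          qed
        qed blast
        then show ?thesis unfolding K_def by blast
      next
        case False
        then obtain y0 where y0: "y0 \<in> pi" "p y0 \<noteq> 0" by blast
        define W where "W = p ` pi"
        have sW: "vec.subspace W" unfolding W_def using vec.linear_subspace_image[OF p(1) spi(1)] .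
        have WG: "W \<subseteq> Gam" unfolding W_def using pGam by blast
        have dW: "\<not> vec.dim W \<ge> 2"
        proof
          assume "vec.dim W \<ge> 2"
          then obtain L where L: "pline L" "L \<subseteq> W" using contains_line[OF sW] by blast
          then obtain P where P: "P \<in> B" "P \<subseteq> L" using bl WG unfolding blocking_set_def by blast
          then have "ppoint P" using Bsub unfolding points_of_def by auto
          then obtain v where v: "v \<noteq> 0" "P = vec.span {v}" using ppoint_ex by blast
          have "v \<in> W" using v P L vec.span_base by blast
          then obtain y where "y \<in> pi" "v = p y" unfolding W_def by blast
          then show False using B2 v P by blast
        qed
        have Wy: "W = vec.span {p y0}"
        proof -
          have sub: "vec.span {p y0} \<subseteq> W" using y0 sW unfolding W_def
            by (intro vec.span_minimal) auto
          have "vec.dim W \<le> vec.dim (vec.span {p y0})" using dW y0 by (simp add: vec.dim_span)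
          then show ?thesis using vec.subspace_dim_equal[OF vec.subspace_span sW sub] by simp
        qed
        define N where "N = pi \<inter> {x. p x = 0}"
        have sN: "vec.subspace N" unfolding N_def
          using vec.subspace_inter spi(1) vec.linear_subspace_kernel[OF p(1)] by blast
        have Npi: "N \<subseteq> pi" unfolding N_def by blast
        have "pi \<subseteq> vec.span (insert y0 N)"
        proof
          fix x assume x: "x \<in> pi"
          then have "p x \<in> vec.span {p y0}" using Wy unfolding W_def by blast
          then obtain c where c: "p x = c *s p y0" using vec.span_singleton by blast
          have "x - c *s y0 \<in> N" unfolding N_def using x y0 c plin spi(1)
            by (simp add: vec.subspace_diff vec.subspace_scale)
          then have "x - c *s y0 \<in> vec.span N" using vec.span_base by blast
          then show "x \<in> vec.span (insert y0 N)" unfolding vec.span_breakdown_eq by blast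
        qed
        then have "3 \<le> vec.dim (insert y0 N)" using vec.subset_le_dim spi(2) by metis
        also have "\<dots> \<le> vec.dim N + 1" by (simp add: vec.dim_insert)
        finally have dN1: "2 \<le> vec.dim N" by simp
        have dN2: "\<not> 3 \<le> vec.dim N"
        proof
          assume "3 \<le> vec.dim N"
          then have "N = pi" using vec.subspace_dim_equal[OF sN spi(1) Npi] spi(2) by simp
          then show False using y0 unfolding N_def by blast
        qed
        have Nl: "pline N" unfolding pline_def using sN dN1 dN2 by simp
        have RN: "R \<subseteq> N" unfolding R_def using r sN unfolding N_def
          by (intro vec.span_minimal) auto
        have "K \<inter> points_of pi = points_of N"
        proof
          show "K \<inter> points_of pi \<subseteq> points_of N"
          proof
            fix X assume X: "X \<in> K \<inter> points_of pi"
            then obtain x where x: "x \<in> pi" "x \<noteq> 0" "X = vec.span {x}" using ptex by blast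
            have "p x = 0" using crit[OF x(1) x(2)] X x B2 by blast
            then have "X \<subseteq> N" unfolding x(3) using x sN unfolding N_def
              by (intro vec.span_minimal) auto
            then show "X \<in> points_of N" using X unfolding points_of_def by blast
          qed
        next
          show "points_of N \<subseteq> K \<inter> points_of pi"
          proof
            fix X assume X: "X \<in> points_of N"
            then have XN: "ppoint X" "X \<subseteq> N" unfolding points_of_def by auto
            then obtain x where x: "x \<noteq> 0" "X = vec.span {x}" using ppoint_ex by blast
            have "x \<in> N" using x XN vec.span_base by blast
            then have "x \<in> pi" "p x = 0" unfolding N_def by auto
            then show "X \<in> K \<inter> points_of pi" using crit[of x] x XN Npi unfolding points_of_def by auto
          qed
        qed
        then have "\<exists>LL. LL \<noteq> {} \<and> (\<forall>L\<in>LL. pline L \<and> R \<subseteq> L \<and> L \<subseteq> pi) \<and>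
             K \<inter> points_of pi = (\<Union>L\<in>LL. points_of L)"
          using Nl RN Npi by (intro exI[of _ "{N}"]) auto
        then have "\<exists>R LL. ppoint R \<and> R \<subseteq> pi \<and> LL \<noteq> {} \<and> (\<forall>L\<in>LL. pline L \<and> R \<subseteq> L \<and> L \<subseteq> pi) \<and>
             K \<inter> points_of pi = (\<Union>L\<in>LL. points_of L)" using Rp by (intro exI[of _ R]) simp
        then show ?thesis unfolding K_def by (intro disjI2 disjI1)
      qed
    qed
  qed
qed


end
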